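(* Let $G$ be a graph without isolated vertices. There exists a GDDS $S$ of $G$ such that $|\widehat{S^1}|\ge|\widehat{S^2}|$; in particular $|\widehat{S^1}|\ge\gamma_{gr}^{\times2}(G)/2$.
   Context: Graphs are finite, simple, undirected; $N[v]$ closed neighborhood. A sequence $S=(v_1,\dots,v_k)$ of distinct vertices is a double neighborhood sequence if for each $i$ some $w\in N[v_i]$ satisfies $|\{j<i:w\in N[v_j]\}|\le1$; a double dominating sequence (DDS) if moreover its vertex set $D$ satisfies $|N[w]\cap D|\ge2$ for all $w$; a GDDS is a DDS of maximum length, and this length is $\gamma_{gr}^{\times2}(G)$. $\widehat S$ is the vertex set of $S$. $S^1$ is the subsequence of $S$ consisting of those $v_i$ with $N[v_i]\setminus\bigcup_{j<i}N[v_j]\neq\emptyset$, and $S^2$ is the subsequence of the remaining vertices. *)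

theory Defs
  imports Main
begin

definition simple_graph :: "'a set \<Rightarrow> ('a \<Rightarrow> 'a \<Rightarrow> bool) \<Rightarrow> bool" where
  "simple_graph V E \<longleftrightarrow> finite V \<and> (\<forall>u v. E u v \<longrightarrow> u \<in> V \<and> v \<in> V)
     \<and> (\<forall>u v. E u v \<longrightarrow> E v u) \<and> (\<forall>v. \<not> E v v)"

definition no_isolated :: "'a set \<Rightarrow> ('a \<Rightarrow> 'a \<Rightarrow> bool) \<Rightarrow> bool" where
  "no_isolated V E \<longleftrightarrow> (\<forall>v\<in>V. \<exists>w. E v w)"

definition cnbhd :: "'a set \<Rightarrow> ('a \<Rightarrow> 'a \<Rightarrow> bool) \<Rightarrow> 'a \<Rightarrow> 'a set" where
  "cnbhd V E v = insert v {w \<in> V. E v w}"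

definition double_nbhd_seq :: "'a set \<Rightarrow> ('a \<Rightarrow> 'a \<Rightarrow> bool) \<Rightarrow> 'a list \<Rightarrow> bool" where
  "double_nbhd_seq V E S \<longleftrightarrow> distinct S \<and> set S \<subseteq> V \<and>
     (\<forall>i < length S. \<exists>w \<in> cnbhd V E (S ! i).
        card {j. j < i \<and> w \<in> cnbhd V E (S ! j)} \<le> 1)"

definition is_DDS :: "'a set \<Rightarrow> ('a \<Rightarrow> 'a \<Rightarrow> bool) \<Rightarrow> 'a list \<Rightarrow> bool" where
  "is_DDS V E S \<longleftrightarrow> double_nbhd_seq V E S \<and>
     (\<forall>w \<in> V. card (cnbhd V E w \<inter> set S) \<ge> 2)"

definition gamma_gr2 :: "'a set \<Rightarrow> ('a \<Rightarrow> 'a \<Rightarrow> bool) \<Rightarrow> nat" where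
  "gamma_gr2 V E = Max {length S | S. is_DDS V E S}"

definition is_GDDS :: "'a set \<Rightarrow> ('a \<Rightarrow> 'a \<Rightarrow> bool) \<Rightarrow> 'a list \<Rightarrow> bool" where
  "is_GDDS V E S \<longleftrightarrow> is_DDS V E S \<and> (\<forall>T. is_DDS V E T \<longrightarrow> length T \<le> length S)"

definition seq1 :: "'a set \<Rightarrow> ('a \<Rightarrow> 'a \<Rightarrow> bool) \<Rightarrow> 'a list \<Rightarrow> 'a list" where
  "seq1 V E S = [S ! i. i \<leftarrow> [0..<length S],
      cnbhd V E (S ! i) - (\<Union>j\<in>{..<i}. cnbhd V E (S ! j)) \<noteq> {}]"

definition seq2 :: "'a set \<Rightarrow> ('a \<Rightarrow> 'a \<Rightarrow> bool) \<Rightarrow> 'a list \<Rightarrow> 'a list" where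
  "seq2 V E S = [S ! i. i \<leftarrow> [0..<length S],
      cnbhd V E (S ! i) - (\<Union>j\<in>{..<i}. cnbhd V E (S ! j)) = {}]"

end

theory Submission
  imports Defs
begin

fun pre :: "'a list \<Rightarrow> 'a \<Rightarrow> 'a set" where
  "pre [] z = {}"
| "pre (x # xs) z = (if x = z then {} else insert x (pre xs z))"

definition okp :: "'a set \<Rightarrow> ('a \<Rightarrow> 'a \<Rightarrow> bool) \<Rightarrow> 'a set \<Rightarrow> 'a \<Rightarrow> bool" where
  "okp V E P x \<longleftrightarrow> (\<exists>w\<in>cnbhd V E x. card {y\<in>P. w \<in> cnbhd V E y} \<le> 1)"

definition nwp :: "'a set \<Rightarrow> ('a \<Rightarrow> 'a \<Rightarrow> bool) \<Rightarrow> 'a set \<Rightarrow> 'a \<Rightarrow> bool" where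
  "nwp V E P x \<longleftrightarrow> cnbhd V E x - \<Union>(cnbhd V E ` P) \<noteq> {}"

lemma pre_append: "pre (xs @ ys) z = (if z \<in> set xs then pre xs z else set xs \<union> pre ys z)"
  by (induction xs) auto

lemma pre_subset: "pre xs z \<subseteq> set xs"
  by (induction xs) auto

lemma pre_notin: "z \<notin> pre xs z"
  by (induction xs) auto

lemma pre_trans: "y \<in> pre xs x \<Longrightarrow> pre xs y \<subseteq> pre xs x"
  by (induction xs) (auto split: if_splits)

lemma pre_total: "x1 \<in> set xs \<Longrightarrow> x2 \<in> set xs \<Longrightarrow> x1 \<noteq> x2 \<Longrightarrow> x1 \<in> pre xs x2 \<or> x2 \<in> pre xs x1"
  by (induction xs) auto

lemma pre_nth: "distinct S \<Longrightarrow> i < length S \<Longrightarrow> pre S (S ! i) = set (take i S)"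
proof (induction S arbitrary: i)
  case Nil then show ?case by simp
next
  case (Cons a xs)
  show ?case
  proof (cases i)
    case 0 then show ?thesis by simp
  next
    case (Suc k)
    with Cons have "xs ! k \<noteq> a" using nth_mem by force
    with Cons Suc show ?thesis by auto
  qed
qed

lemma okp_mono: "okp V E P x \<Longrightarrow> P' \<subseteq> P \<Longrightarrow> finite P \<Longrightarrow> okp V E P' x"
  unfolding okp_def
proof -
  assume "\<exists>w\<in>cnbhd V E x. card {y \<in> P. w \<in> cnbhd V E y} \<le> 1" "P' \<subseteq> P" "finite P"
  then obtain w where w: "w\<in>cnbhd V E x" "card {y \<in> P. w \<in> cnbhd V E y} \<le> 1" by blast
  have "card {y \<in> P'. w \<in> cnbhd V E y} \<le> card {y \<in> P. w \<in> cnbhd V E y}"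
    using \<open>P' \<subseteq> P\<close> \<open>finite P\<close> by (intro card_mono) auto
  with w show "\<exists>w\<in>cnbhd V E x. card {y \<in> P'. w \<in> cnbhd V E y} \<le> 1"
    by (intro bexI[of _ w]) auto
qed

lemma nwp_mono: "nwp V E P x \<Longrightarrow> P' \<subseteq> P \<Longrightarrow> nwp V E P' x"
  unfolding nwp_def by blast

lemma nwp_okp: "nwp V E P x \<Longrightarrow> okp V E P x"
  unfolding nwp_def okp_def
proof -
  assume "cnbhd V E x - \<Union> (cnbhd V E ` P) \<noteq> {}"
  then obtain w where "w \<in> cnbhd V E x" "\<forall>y\<in>P. w \<notin> cnbhd V E y" by blast
  then have e: "{y \<in> P. w \<in> cnbhd V E y} = {}" by blast
  show "\<exists>w\<in>cnbhd V E x. card {y \<in> P. w \<in> cnbhd V E y} \<le> 1"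
  proof
    show "card {y \<in> P. w \<in> cnbhd V E y} \<le> 1" unfolding e by simp
  qed fact
qed

lemma card_idx: assumes "distinct S" "i < length S"
  shows "card {j. j < i \<and> Q (S ! j)} = card {y \<in> set (take i S). Q y}"
proof -
  have "set (take i S) = (!) S ` {0..<i}" using assms by (simp add: nth_image)
  then have "{y \<in> set (take i S). Q y} = (!) S ` {j. j < i \<and> Q (S ! j)}" by auto
  moreover have "inj_on ((!) S) {j. j < i \<and> Q (S ! j)}"
    using assms by (intro inj_on_nth) auto
  ultimately show ?thesis by (simp add: card_image)
qed

lemma okp_idx: assumes "distinct S" "i < length S"
  shows "okp V E (pre S (S!i)) (S!i) \<longleftrightarrow>
    (\<exists>w \<in> cnbhd V E (S ! i). card {j. j < i \<and> w \<in> cnbhd V E (S ! j)} \<le> 1)"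
proof -
  have "\<forall>w. card {j. j < i \<and> w \<in> cnbhd V E (S ! j)} = card {y \<in> set (take i S). w \<in> cnbhd V E y}"
    by (rule allI, rule card_idx[OF assms])
  then show ?thesis unfolding okp_def using assms by (simp add: pre_nth)
qed

lemma dns_char: "double_nbhd_seq V E S \<longleftrightarrow>
   distinct S \<and> set S \<subseteq> V \<and> (\<forall>x\<in>set S. okp V E (pre S x) x)"
proof -
  have "(\<forall>x\<in>set S. okp V E (pre S x) x) \<longleftrightarrow>
    (\<forall>i < length S. \<exists>w \<in> cnbhd V E (S ! i). card {j. j < i \<and> w \<in> cnbhd V E (S ! j)} \<le> 1)"
    if "distinct S"
    using that by (simp add: all_set_conv_all_nth okp_idx)
  then show ?thesis unfolding double_nbhd_seq_def by blast
qed

lemma UN_idx: assumes "i < length S"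
  shows "(\<Union>j\<in>{..<i}. f (S ! j)) = \<Union>(f ` set (take i S))"
proof -
  have "set (take i S) = (!) S ` {..<i}" using assms by (simp add: nth_image[symmetric] atLeast0LessThan)
  then show ?thesis by (simp add: image_image)
qed

lemma nwp_idx: assumes "distinct S" "i < length S"
  shows "nwp V E (pre S (S!i)) (S!i) \<longleftrightarrow>
    cnbhd V E (S ! i) - (\<Union>j\<in>{..<i}. cnbhd V E (S ! j)) \<noteq> {}"
  unfolding nwp_def using assms by (simp add: pre_nth UN_idx)

lemma seq1_char: assumes "distinct S" shows "set (seq1 V E S) = {x\<in>set S. nwp V E (pre S x) x}"
proof -
  have A: "{0..<length S} \<inter> {i. cnbhd V E (S ! i) - (\<Union>j\<in>{..<i}. cnbhd V E (S ! j)) \<noteq> {}}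
     = {i. i < length S \<and> nwp V E (pre S (S!i)) (S!i)}"
  proof (rule set_eqI)
    fix i show "i \<in> {0..<length S} \<inter> {i. cnbhd V E (S ! i) - (\<Union>j\<in>{..<i}. cnbhd V E (S ! j)) \<noteq> {}} \<longleftrightarrow>
       i \<in> {i. i < length S \<and> nwp V E (pre S (S!i)) (S!i)}"
      using nwp_idx[OF assms(1), of i V E] by auto
  qed
  have "set (seq1 V E S) = (!) S ` ({0..<length S} \<inter> {i. cnbhd V E (S ! i) - (\<Union>j\<in>{..<i}. cnbhd V E (S ! j)) \<noteq> {}})"
    unfolding seq1_def by (simp; blast)
  also have "\<dots> = (!) S ` {i. i < length S \<and> nwp V E (pre S (S!i)) (S!i)}"
    unfolding A ..
  also have "\<dots> = {x\<in>set S. nwp V E (pre S x) x}"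
    by (auto simp: in_set_conv_nth)
  finally show ?thesis .
qed

lemma seq2_char: assumes "distinct S" shows "set (seq2 V E S) = {x\<in>set S. \<not> nwp V E (pre S x) x}"
proof -
  have A: "{0..<length S} \<inter> {i. cnbhd V E (S ! i) - (\<Union>j\<in>{..<i}. cnbhd V E (S ! j)) = {}}
     = {i. i < length S \<and> \<not> nwp V E (pre S (S!i)) (S!i)}"
  proof (rule set_eqI)
    fix i show "i \<in> {0..<length S} \<inter> {i. cnbhd V E (S ! i) - (\<Union>j\<in>{..<i}. cnbhd V E (S ! j)) = {}} \<longleftrightarrow>
       i \<in> {i. i < length S \<and> \<not> nwp V E (pre S (S!i)) (S!i)}"
      using nwp_idx[OF assms(1), of i V E] by auto
  qed
  have "set (seq2 V E S) = (!) S ` ({0..<length S} \<inter> {i. cnbhd V E (S ! i) - (\<Union>j\<in>{..<i}. cnbhd V E (S ! j)) = {}})"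
    unfolding seq2_def by (simp; blast)
  also have "\<dots> = (!) S ` {i. i < length S \<and> \<not> nwp V E (pre S (S!i)) (S!i)}"
    unfolding A ..
  also have "\<dots> = {x\<in>set S. \<not> nwp V E (pre S x) x}"
    by (auto simp: in_set_conv_nth)
  finally show ?thesis .
qed


lemma exchange:
  assumes S: "double_nbhd_seq V E S"
    and x1: "x1 \<in> set S" "\<not> nwp V E (pre S x1) x1"
    and x12: "x1 \<in> pre S x2"
    and w1: "w1 \<in> cnbhd V E x1" "y \<in> pre S x1" "w1 \<in> cnbhd V E y"
            "\<forall>z\<in>pre S x1. w1 \<in> cnbhd V E z \<longrightarrow> z = y"
    and w2: "w2 \<in> cnbhd V E y" "\<forall>z\<in>pre S x2. w2 \<in> cnbhd V E z \<longrightarrow> z = y"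
  shows "\<exists>S'. double_nbhd_seq V E S' \<and> set S' = set S \<and> length S' = length S \<and>
     card {x\<in>set S. nwp V E (pre S x) x} < card {x\<in>set S'. nwp V E (pre S' x) x}"
proof -
  have dS: "distinct S" and SV: "set S \<subseteq> V" and okS: "\<forall>x\<in>set S. okp V E (pre S x) x"
    using S by (auto simp: dns_char)
  have "y \<in> set S" using w1(2) pre_subset by fast
  then obtain A R where SAR: "S = A @ y # R" by (meson split_list)
  have "x1 \<noteq> y" using w1(2) pre_notin by fast
  have "x1 \<notin> set A"
  proof
    assume "x1 \<in> set A"
    then have "pre S x1 = pre A x1" unfolding SAR by (simp add: pre_append)
    then have "y \<in> set A" using w1(2) pre_subset by fast
    then show False using dS SAR by simp
  qed
  then have "x1 \<in> set R" using x1(1) \<open>x1 \<noteq> y\<close> SAR by simp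
  then obtain B C where RBC: "R = B @ x1 # C" by (meson split_list)
  define S' where "S' = A @ B @ x1 # y # C"
  have SABC: "S = A @ y # B @ x1 # C" using SAR RBC by simp
  have dist: "distinct (A @ y # B @ x1 # C)" using dS SABC by simp
  have dS': "distinct S'" using dist unfolding S'_def by auto
  have setS': "set S' = set S" unfolding S'_def SABC by auto
  have lenS': "length S' = length S" unfolding S'_def SABC by simp
  have P1: "pre S x1 = set A \<union> insert y (set B)"
    using dist unfolding SABC by (auto simp: pre_append)
  have P2: "pre S' y = set A \<union> set B \<union> {x1}"
    using dist unfolding S'_def by (auto simp: pre_append)
  have P3: "pre S' x1 = set A \<union> set B"
    using dist unfolding S'_def by (auto simp: pre_append)
  have P4: "pre S' z \<subseteq> pre S z" if "z \<in> set S" "z \<noteq> y" for z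
  proof -
    have "z \<in> set A \<or> z \<in> set B \<or> z = x1 \<or> z \<in> set C" using that SABC by auto
    then show ?thesis
      using dist unfolding S'_def SABC by (auto simp: pre_append)
  qed
  have nwy: "nwp V E (pre S' y) y"
  proof -
    have sub: "pre S' y \<subseteq> pre S x2"
      using P2 P1 pre_trans[OF x12] x12 by auto
    have "y \<notin> pre S' y" by (rule pre_notin)
    then have "\<forall>z\<in>pre S' y. w2 \<notin> cnbhd V E z" using sub w2(2) by blast
    then show ?thesis unfolding nwp_def using w2(1) by blast
  qed
  have nwx1: "nwp V E (pre S' x1) x1"
  proof -
    have "\<forall>z\<in>pre S' x1. w1 \<notin> cnbhd V E z" using P3 P1 w1(4) dist by auto
    then show ?thesis unfolding nwp_def using w1(1) by blast
  qed
  have okS': "\<forall>x\<in>set S'. okp V E (pre S' x) x"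
  proof
    fix z assume "z \<in> set S'"
    then have z: "z \<in> set S" using setS' by simp
    show "okp V E (pre S' z) z"
    proof (cases "z = y")
      case True then show ?thesis using nwp_okp[OF nwy] by simp
    next
      case False
      have "finite (pre S z)" by (rule finite_subset[OF pre_subset]) simp
      then show ?thesis using okp_mono[OF bspec[OF okS z] P4[OF z False]] by blast
    qed
  qed
  have legal: "double_nbhd_seq V E S'" using dS' setS' SV okS' by (simp add: dns_char)
  have sub: "{x\<in>set S. nwp V E (pre S x) x} \<subseteq> {x\<in>set S'. nwp V E (pre S' x) x}"
  proof
    fix z assume "z \<in> {x\<in>set S. nwp V E (pre S x) x}"
    then have z: "z \<in> set S" "nwp V E (pre S z) z" by auto
    show "z \<in> {x\<in>set S'. nwp V E (pre S' x) x}"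
    proof (cases "z = y")
      case True then show ?thesis using nwy z setS' by simp
    next
      case False then show ?thesis using nwp_mono[OF z(2) P4[OF z(1) False]] z setS' by simp
    qed
  qed
  have "x1 \<in> {x\<in>set S'. nwp V E (pre S' x) x}" "x1 \<notin> {x\<in>set S. nwp V E (pre S x) x}"
    using nwx1 x1 setS' by auto
  then have "{x\<in>set S. nwp V E (pre S x) x} \<subset> {x\<in>set S'. nwp V E (pre S' x) x}"
    using sub by blast
  then have "card {x\<in>set S. nwp V E (pre S x) x} < card {x\<in>set S'. nwp V E (pre S' x) x}"
    by (rule psubset_card_mono[rotated]) simp
  then show ?thesis using legal setS' lenS' by blast
qed


lemma len_bound: "double_nbhd_seq V E S \<Longrightarrow> finite V \<Longrightarrow> length S \<le> card V"
  unfolding double_nbhd_seq_def by (metis card_mono distinct_card)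

lemma exists_GDDS:
  assumes G: "simple_graph V E" and NI: "no_isolated V E"
  shows "\<exists>S. is_GDDS V E S"
proof -
  have fin: "finite V" using G by (simp add: simple_graph_def)
  have "double_nbhd_seq V E []" by (simp add: double_nbhd_seq_def)
  then obtain S0 where S0: "double_nbhd_seq V E S0"
    and mx: "\<forall>T. double_nbhd_seq V E T \<longrightarrow> length T \<le> length S0"
    using ex_has_greatest_nat[of "double_nbhd_seq V E" "[]" length "Suc (card V)"]
      len_bound[OF _ fin] by (metis le_imp_less_Suc)
  have dom: "card (cnbhd V E w \<inter> set S0) \<ge> 2" if wV: "w \<in> V" for w
  proof (rule ccontr)
    assume c: "\<not> 2 \<le> card (cnbhd V E w \<inter> set S0)"
    obtain v where "E w v" using NI wV by (auto simp: no_isolated_def)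
    then have v: "v \<in> V" "v \<noteq> w" using G by (auto simp: simple_graph_def)
    have Nw: "cnbhd V E w \<subseteq> V" using wV by (auto simp: cnbhd_def)
    have "{w, v} \<subseteq> cnbhd V E w" using \<open>E w v\<close> v by (auto simp: cnbhd_def)
    then have "card {w, v} \<le> card (cnbhd V E w)"
      using Nw fin by (intro card_mono) (auto intro: finite_subset)
    then have c2: "2 \<le> card (cnbhd V E w)" using v by simp
    have "\<not> cnbhd V E w \<subseteq> set S0"
    proof
      assume "cnbhd V E w \<subseteq> set S0"
      then have "cnbhd V E w \<inter> set S0 = cnbhd V E w" by blast
      with c c2 show False by simp
    qed
    then obtain u where u: "u \<in> cnbhd V E w" "u \<notin> set S0" by blast
    have uV: "u \<in> V" using u Nw by blast
    have wu: "w \<in> cnbhd V E u" using u G wV by (auto simp: cnbhd_def simple_graph_def)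
    have eq: "{y \<in> set S0. w \<in> cnbhd V E y} = cnbhd V E w \<inter> set S0"
      using G wV S0 by (auto simp: cnbhd_def simple_graph_def double_nbhd_seq_def)
    have okS0: "distinct S0" "set S0 \<subseteq> V" "\<forall>x\<in>set S0. okp V E (pre S0 x) x"
      using S0 by (auto simp: dns_char)
    have "okp V E (set S0) u" unfolding okp_def using wu eq c by (intro bexI[of _ w]) auto
    then have "double_nbhd_seq V E (S0 @ [u])"
      using okS0 u uV by (auto simp: dns_char pre_append)
    then have "length (S0 @ [u]) \<le> length S0" using mx by blast
    then show False by simp
  qed
  have "is_DDS V E S0" using S0 dom by (simp add: is_DDS_def)
  moreover have "\<forall>T. is_DDS V E T \<longrightarrow> length T \<le> length S0" using mx by (simp add: is_DDS_def)
  ultimately show ?thesis unfolding is_GDDS_def by blast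
qed


theorem corollary1:
  fixes V :: "'a set" and E :: "'a \<Rightarrow> 'a \<Rightarrow> bool"
  assumes "simple_graph V E" and "no_isolated V E"
  shows "\<exists>S. is_GDDS V E S \<and>
           card (set (seq1 V E S)) \<ge> card (set (seq2 V E S)) \<and>
           2 * card (set (seq1 V E S)) \<ge> gamma_gr2 V E"
proof -
  have fin: "finite V" using assms(1) by (simp add: simple_graph_def)
  define k1 where "k1 T = card {x\<in>set T. nwp V E (pre T x) x}" for T
  obtain S0 where "is_GDDS V E S0" using exists_GDDS[OF assms] by blast
  moreover have "\<forall>T. is_GDDS V E T \<longrightarrow> k1 T < Suc (card V)"
  proof (intro allI impI)
    fix T assume "is_GDDS V E T"
    then have T: "double_nbhd_seq V E T" by (simp add: is_GDDS_def is_DDS_def)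
    have "k1 T \<le> card (set T)" unfolding k1_def by (intro card_mono) auto
    also have "\<dots> \<le> length T" by (rule card_length)
    also have "\<dots> \<le> card V" by (rule len_bound[OF T fin])
    finally show "k1 T < Suc (card V)" by simp
  qed
  ultimately obtain S where S: "is_GDDS V E S" and mx: "\<forall>T. is_GDDS V E T \<longrightarrow> k1 T \<le> k1 S"
    using ex_has_greatest_nat[of "is_GDDS V E" S0 k1 "Suc (card V)"] by blast
  have SD: "is_DDS V E S" and Smax: "\<forall>T. is_DDS V E T \<longrightarrow> length T \<le> length S"
    using S by (auto simp: is_GDDS_def)
  have Sl: "double_nbhd_seq V E S" using SD by (simp add: is_DDS_def)
  have dS: "distinct S" and okS: "\<forall>x\<in>set S. okp V E (pre S x) x"
    using Sl by (auto simp: dns_char)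
  define X1 where "X1 = {x\<in>set S. nwp V E (pre S x) x}"
  define X2 where "X2 = {x\<in>set S. \<not> nwp V E (pre S x) x}"
  define Q where "Q x p \<longleftrightarrow> fst p \<in> cnbhd V E x \<and> snd p \<in> pre S x \<and> fst p \<in> cnbhd V E (snd p) \<and>
          (\<forall>z\<in>pre S x. fst p \<in> cnbhd V E z \<longrightarrow> z = snd p)" for x p
  have ex: "\<exists>p. Q x p" if "x \<in> X2" for x
  proof -
    from that have x: "x \<in> set S" "\<not> nwp V E (pre S x) x" by (auto simp: X2_def)
    obtain w where w: "w \<in> cnbhd V E x" "card {y\<in>pre S x. w \<in> cnbhd V E y} \<le> 1"
      using okS x(1) by (auto simp: okp_def)
    from x(2) w(1) obtain y where y: "y \<in> pre S x" "w \<in> cnbhd V E y"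
      unfolding nwp_def by blast
    define A where "A = {y\<in>pre S x. w \<in> cnbhd V E y}"
    have fp: "finite A" unfolding A_def
      by (rule finite_subset[of _ "set S"]) (use pre_subset[of S x] in auto)
    have cA: "card A \<le> Suc 0" using w(2) unfolding A_def by simp
    have all: "\<forall>a\<in>A. \<forall>b\<in>A. a = b" using cA unfolding card_le_Suc0_iff_eq[OF fp] .
    have yA: "y \<in> A" using y unfolding A_def by simp
    have u: "\<forall>z\<in>pre S x. w \<in> cnbhd V E z \<longrightarrow> z = y"
    proof (intro ballI impI)
      fix z assume "z \<in> pre S x" "w \<in> cnbhd V E z"
      then have "z \<in> A" unfolding A_def by simp
      with yA all show "z = y" by blast
    qed
    have "Q x (w, y)" unfolding Q_def fst_conv snd_conv using w(1) y u by (intro conjI)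
    then show ?thesis ..
  qed
  define f where "f x = (SOME p. Q x p)" for x
  have f: "\<forall>x\<in>X2. fst (f x) \<in> cnbhd V E x \<and> snd (f x) \<in> pre S x \<and>
     fst (f x) \<in> cnbhd V E (snd (f x)) \<and>
     (\<forall>z\<in>pre S x. fst (f x) \<in> cnbhd V E z \<longrightarrow> z = snd (f x))"
  proof
    fix x assume "x \<in> X2"
    then have "Q x (f x)" unfolding f_def by (rule someI_ex[OF ex])
    then show "fst (f x) \<in> cnbhd V E x \<and> snd (f x) \<in> pre S x \<and>
     fst (f x) \<in> cnbhd V E (snd (f x)) \<and>
     (\<forall>z\<in>pre S x. fst (f x) \<in> cnbhd V E z \<longrightarrow> z = snd (f x))" unfolding Q_def .
  qed
  define Y where "Y x = snd (f x)" for x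
  have noex: False if a: "x1 \<in> X2" "x2 \<in> X2" "x1 \<in> pre S x2" "Y x1 = Y x2" for x1 x2
  proof -
    have "\<exists>S'. double_nbhd_seq V E S' \<and> set S' = set S \<and> length S' = length S \<and>
     card {x\<in>set S. nwp V E (pre S x) x} < card {x\<in>set S'. nwp V E (pre S' x) x}"
    proof -
      note f1 = bspec[OF f a(1)] and f2 = bspec[OF f a(2)]
      have e: "snd (f x2) = snd (f x1)" using a(4) unfolding Y_def by simp
      have x1S: "x1 \<in> set S" "\<not> nwp V E (pre S x1) x1" using a(1) unfolding X2_def by simp_all
      show ?thesis
        by (rule exchange[OF Sl x1S a(3) f1[THEN conjunct1] f1[THEN conjunct2, THEN conjunct1]
          f1[THEN conjunct2, THEN conjunct2, THEN conjunct1] f1[THEN conjunct2, THEN conjunct2, THEN conjunct2]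
          f2[THEN conjunct2, THEN conjunct2, THEN conjunct1, unfolded e]
          f2[THEN conjunct2, THEN conjunct2, THEN conjunct2, unfolded e]])
    qed
    then obtain S' where S': "double_nbhd_seq V E S'" "set S' = set S" "length S' = length S"
      "card {x\<in>set S. nwp V E (pre S x) x} < card {x\<in>set S'. nwp V E (pre S' x) x}"
      by (elim exE conjE)
    have lt: "k1 S < k1 S'" unfolding k1_def by (rule S'(4))
    have "is_DDS V E S'" using S'(1,2) SD unfolding is_DDS_def by simp
    then have "is_GDDS V E S'" using Smax S'(3) unfolding is_GDDS_def by simp
    then have "k1 S' \<le> k1 S" using mx by simp
    then show False using lt by linarith
  qed
  have inj: "inj_on Y X2"
  proof (rule inj_onI)
    fix x1 x2 assume a: "x1 \<in> X2" "x2 \<in> X2" "Y x1 = Y x2"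
    show "x1 = x2"
    proof (rule ccontr)
      assume ne: "x1 \<noteq> x2"
      have s1: "x1 \<in> set S" using a(1) unfolding X2_def by simp
      have s2: "x2 \<in> set S" using a(2) unfolding X2_def by simp
      from pre_total[OF s1 s2 ne] show False
      proof
        assume "x1 \<in> pre S x2" then show False by (rule noex[OF a(1) a(2) _ a(3)])
      next
        assume "x2 \<in> pre S x1" then show False by (rule noex[OF a(2) a(1) _ a(3)[symmetric]])
      qed
    qed
  qed
  have img: "Y ` X2 \<subseteq> X1"
  proof
    fix y assume "y \<in> Y ` X2"
    then obtain x where x: "x \<in> X2" "y = Y x" by blast
    define w where "w = fst (f x)"
    note fx = bspec[OF f x(1)]
    have h: "y \<in> pre S x" "w \<in> cnbhd V E y" "\<forall>z\<in>pre S x. w \<in> cnbhd V E z \<longrightarrow> z = y"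
      unfolding x(2) Y_def w_def
      by (rule fx[THEN conjunct2, THEN conjunct1], rule fx[THEN conjunct2, THEN conjunct2, THEN conjunct1],
          rule fx[THEN conjunct2, THEN conjunct2, THEN conjunct2])
    have "\<forall>z\<in>pre S y. w \<notin> cnbhd V E z"
      using h pre_trans[OF h(1)] pre_notin[of y S] by blast
    then have "nwp V E (pre S y) y" unfolding nwp_def using h(2) by blast
    moreover have "y \<in> set S" using h(1) pre_subset by fast
    ultimately show "y \<in> X1" by (simp add: X1_def)
  qed
  have c21: "card X2 \<le> card X1"
    by (rule card_inj_on_le[OF inj img]) (simp add: X1_def)
  have s1: "set (seq1 V E S) = X1" using seq1_char[OF dS] by (simp add: X1_def)
  have s2: "set (seq2 V E S) = X2" using seq2_char[OF dS] by (simp add: X2_def)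
  have "card X1 + card X2 = card (set S)"
    unfolding X1_def X2_def by (subst card_Un_disjoint[symmetric]) (auto intro: arg_cong[where f=card])
  then have lenS: "length S = card X1 + card X2" using distinct_card[OF dS] by simp
  have "gamma_gr2 V E = length S"
    unfolding gamma_gr2_def
  proof (rule Max_eqI)
    show "finite {length S |S. is_DDS V E S}"
      by (rule finite_subset[of _ "{..card V}"])
        (auto simp: is_DDS_def intro: len_bound[OF _ fin])
    show "length S \<in> {length S |S. is_DDS V E S}" using SD by blast
  qed (use Smax in auto)
  then show ?thesis using S c21 s1 s2 lenS by auto
qed

end
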